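(* Let $(\mathbb S,+,\cdot)$ be a Commutative S-Structure which is Wheel Distributive and satisfies $0\in\mathbb S_0$. Then $(\mathbb S,+,\cdot)$ is Coordinated.
   Context: An S-Structure is a triple $(\mathbb S,+,\cdot)$ where $\mathbb S$ is a set and $+,\cdot$ are binary operations on $\mathbb S$ such that: $(\mathbb S,+)$ is a commutative group with identity $0$ (the inverse of $s$ is written $-s$, and $s-t:=s+(-t)$); $\mathbb S$ is closed under $\cdot$; and there exists $s\in\mathbb S$ with $0\cdot s\neq 0$ or $s\cdot 0\neq 0$. Multiplication binds tighter than addition. It is Commutative if $s\cdot t=t\cdot s$ for all $s,t\in\mathbb S$. For a Commutative S-Structure and $\alpha\in\mathbb S$, put $\mathbb S_\alpha=\{s\in\mathbb S:0\cdot s=s\cdot 0=\alpha\}$ and $\Lambda=\{\alpha\in\mathbb S:\mathbb S_\alpha\neq\emptyset\}$. The structure is Wheel Distributive if $s\cdot(t+r)+(s\cdot 0)=(s\cdot t)+(s\cdot r)$ for all $s,t,r\in\mathbb S$. If $\mathbb S_0\neq\emptyset$ and $\alpha\in\Lambda$, an element $q\in\mathbb S_\alpha$ is a Base for $\mathbb S_\alpha$ if (1) $q+\beta\in\mathbb S_\alpha$ for every $\beta\in\mathbb S_0$, and (2) every $s\in\mathbb S_\alpha$ can be written $s=q+\beta$ for some $\beta\in\mathbb S_0$. The structure is Coordinated if $\mathbb S_0\neq\emptyset$ and for every $\alpha\in\Lambda$ there exists a Base for $\mathbb S_\alpha$. *)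

theory Defs
  imports Main
begin

definition S_structure :: "('a::ab_group_add \<Rightarrow> 'a \<Rightarrow> 'a) \<Rightarrow> bool" where
  "S_structure mul \<longleftrightarrow> (\<exists>s. mul 0 s \<noteq> 0 \<or> mul s 0 \<noteq> 0)"

definition S_commutative :: "('a \<Rightarrow> 'a \<Rightarrow> 'a) \<Rightarrow> bool" where
  "S_commutative mul \<longleftrightarrow> (\<forall>s t. mul s t = mul t s)"

definition S_alpha :: "('a::ab_group_add \<Rightarrow> 'a \<Rightarrow> 'a) \<Rightarrow> 'a \<Rightarrow> 'a set" where
  "S_alpha mul \<alpha> = {s. mul 0 s = \<alpha> \<and> mul s 0 = \<alpha>}"

definition S_Lambda :: "('a::ab_group_add \<Rightarrow> 'a \<Rightarrow> 'a) \<Rightarrow> 'a set" where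
  "S_Lambda mul = {\<alpha>. S_alpha mul \<alpha> \<noteq> {}}"

definition wheel_distributive :: "('a::ab_group_add \<Rightarrow> 'a \<Rightarrow> 'a) \<Rightarrow> bool" where
  "wheel_distributive mul \<longleftrightarrow>
     (\<forall>s t r. mul s (t + r) + mul s 0 = mul s t + mul s r)"

definition is_base :: "('a::ab_group_add \<Rightarrow> 'a \<Rightarrow> 'a) \<Rightarrow> 'a \<Rightarrow> 'a \<Rightarrow> bool" where
  "is_base mul \<alpha> q \<longleftrightarrow> q \<in> S_alpha mul \<alpha> \<and>
     (\<forall>\<beta>\<in>S_alpha mul 0. q + \<beta> \<in> S_alpha mul \<alpha>) \<and>
     (\<forall>s\<in>S_alpha mul \<alpha>. \<exists>\<beta>\<in>S_alpha mul 0. s = q + \<beta>)"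

definition coordinated :: "('a::ab_group_add \<Rightarrow> 'a \<Rightarrow> 'a) \<Rightarrow> bool" where
  "coordinated mul \<longleftrightarrow> S_alpha mul 0 \<noteq> {} \<and>
     (\<forall>\<alpha>\<in>S_Lambda mul. \<exists>q. is_base mul \<alpha> q)"

end

theory Submission
  imports Defs
begin

theorem theorem2p4p1:
  fixes mul :: "'a::ab_group_add \<Rightarrow> 'a \<Rightarrow> 'a"
  assumes "S_structure mul"
    and "S_commutative mul"
    and "wheel_distributive mul"
    and "(0::'a) \<in> S_alpha mul 0"
  shows "coordinated mul"
proof -
  have c: "\<And>s t. mul s t = mul t s" using assms(2) by (simp add: S_commutative_def)
  have z: "mul 0 0 = 0" using assms(4) by (simp add: S_alpha_def)
  have add: "\<And>t r. mul 0 (t + r) = mul 0 t + mul 0 r"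
  proof -
    fix t r
    have "mul 0 (t + r) + mul 0 0 = mul 0 t + mul 0 r"
      using assms(3) unfolding wheel_distributive_def by blast
    then show "mul 0 (t + r) = mul 0 t + mul 0 r" using z by simp
  qed
  have neg: "\<And>t. mul 0 (- t) = - mul 0 t"
  proof -
    fix t
    have "mul 0 (t + - t) = mul 0 t + mul 0 (- t)" by (rule add)
    then have "mul 0 t + mul 0 (- t) = 0" using z by simp
    then show "mul 0 (- t) = - mul 0 t" by (rule add.inverse_unique[symmetric])
  qed
  have SA: "\<And>\<alpha>. S_alpha mul \<alpha> = {s. mul 0 s = \<alpha>}"
  proof -
    fix \<alpha>
    show "S_alpha mul \<alpha> = {s. mul 0 s = \<alpha>}"
      unfolding S_alpha_def
    proof (rule Collect_cong)
      fix s
      have "mul s 0 = mul 0 s" by (rule c)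
      then show "(mul 0 s = \<alpha> \<and> mul s 0 = \<alpha>) = (mul 0 s = \<alpha>)" by simp
    qed
  qed
  show ?thesis
    unfolding coordinated_def
  proof (intro conjI ballI)
    show "S_alpha mul 0 \<noteq> {}" using assms(4) by auto
  next
    fix \<alpha> assume "\<alpha> \<in> S_Lambda mul"
    then obtain q where q: "q \<in> S_alpha mul \<alpha>" by (auto simp: S_Lambda_def)
    have "is_base mul \<alpha> q"
      unfolding is_base_def
    proof (intro conjI ballI)
      show "q \<in> S_alpha mul \<alpha>" by fact
    next
      fix \<beta> assume "\<beta> \<in> S_alpha mul 0"
      then show "q + \<beta> \<in> S_alpha mul \<alpha>" using q unfolding SA by (simp add: add)
    next
      fix s assume s: "s \<in> S_alpha mul \<alpha>"
      have "s - q \<in> S_alpha mul 0" 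
      proof -
        have "mul 0 (s - q) = mul 0 s + - mul 0 q"
          unfolding diff_conv_add_uminus add neg ..
        then show ?thesis using s q unfolding SA by simp
      qed
      then show "\<exists>\<beta>\<in>S_alpha mul 0. s = q + \<beta>" by (intro bexI[of _ "s - q"]) auto
    qed
    then show "\<exists>q. is_base mul \<alpha> q" by blast
  qed
qed

end
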